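(* Let $R$ be a (unital, not necessarily associative) ring and let $\sigma\colon R\to R$ be an additive bijection with $\sigma(1)=1$. If $R$ is left Noetherian, then the non-associative skew Laurent polynomial ring $R[X^{\pm};\sigma]$ is left Noetherian. Likewise, if $R$ is right Noetherian, then $R[X^{\pm};\sigma]$ is right Noetherian.
   Context: All rings are unital but not necessarily associative. A left (right) ideal of a non-associative ring $S$ is an additive subgroup $I$ with $sI\subseteq I$ ($Is\subseteq I$) for all $s\in S$. $S$ is left (right) Noetherian if it satisfies the ascending chain condition on left (right) ideals. For a non-associative ring $R$ and an additive bijection $\sigma\colon R\to R$ with $\sigma(1)=1$, the non-associative skew Laurent polynomial ring $R[X^{\pm};\sigma]$ is the additive group of formal sums $\sum_{i\in\mathbb{Z}} r_iX^i$ with $r_i\in R$, all but finitely many zero, with pointwise addition and multiplication given by the biadditive extension of $(rX^m)(sX^n)=(r\sigma^m(s))X^{m+n}$ for $r,s\in R$, $m,n\in\mathbb{Z}$ (here $\sigma^m$ for $m<0$ denotes a power of $\sigma^{-1}$). *)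

theory Defs
  imports "HOL-Library.Function_Algebras"
begin

definition nonassoc_ring :: "'a::ab_group_add set \<Rightarrow> ('a \<Rightarrow> 'a \<Rightarrow> 'a) \<Rightarrow> 'a \<Rightarrow> bool" where
  "nonassoc_ring S mul e \<longleftrightarrow>
     0 \<in> S \<and> e \<in> S \<and>
     (\<forall>x\<in>S. \<forall>y\<in>S. x + y \<in> S \<and> - x \<in> S \<and> mul x y \<in> S) \<and>
     (\<forall>x\<in>S. \<forall>y\<in>S. \<forall>z\<in>S. mul (x + y) z = mul x z + mul y z \<and> mul x (y + z) = mul x y + mul x z) \<and>
     (\<forall>x\<in>S. mul e x = x \<and> mul x e = x)"

definition additive_subgroup :: "'a::ab_group_add set \<Rightarrow> bool" where
  "additive_subgroup I \<longleftrightarrow> 0 \<in> I \<and> (\<forall>x\<in>I. \<forall>y\<in>I. x + y \<in> I \<and> - x \<in> I)"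

definition left_ideal :: "'a::ab_group_add set \<Rightarrow> ('a \<Rightarrow> 'a \<Rightarrow> 'a) \<Rightarrow> 'a set \<Rightarrow> bool" where
  "left_ideal S mul I \<longleftrightarrow> I \<subseteq> S \<and> additive_subgroup I \<and> (\<forall>s\<in>S. \<forall>x\<in>I. mul s x \<in> I)"

definition right_ideal :: "'a::ab_group_add set \<Rightarrow> ('a \<Rightarrow> 'a \<Rightarrow> 'a) \<Rightarrow> 'a set \<Rightarrow> bool" where
  "right_ideal S mul I \<longleftrightarrow> I \<subseteq> S \<and> additive_subgroup I \<and> (\<forall>s\<in>S. \<forall>x\<in>I. mul x s \<in> I)"

definition left_noetherian :: "'a::ab_group_add set \<Rightarrow> ('a \<Rightarrow> 'a \<Rightarrow> 'a) \<Rightarrow> bool" where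
  "left_noetherian S mul \<longleftrightarrow>
     (\<forall>I :: nat \<Rightarrow> 'a set. (\<forall>n. left_ideal S mul (I n)) \<and> (\<forall>n. I n \<subseteq> I (Suc n))
        \<longrightarrow> (\<exists>N. \<forall>n\<ge>N. I n = I N))"

definition right_noetherian :: "'a::ab_group_add set \<Rightarrow> ('a \<Rightarrow> 'a \<Rightarrow> 'a) \<Rightarrow> bool" where
  "right_noetherian S mul \<longleftrightarrow>
     (\<forall>I :: nat \<Rightarrow> 'a set. (\<forall>n. right_ideal S mul (I n)) \<and> (\<forall>n. I n \<subseteq> I (Suc n))
        \<longrightarrow> (\<exists>N. \<forall>n\<ge>N. I n = I N))"

definition spow :: "('a \<Rightarrow> 'a) \<Rightarrow> int \<Rightarrow> 'a \<Rightarrow> 'a" where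
  "spow \<sigma> m = (if 0 \<le> m then \<sigma> ^^ nat m else (inv \<sigma>) ^^ nat (- m))"

text \<open>Skew Laurent polynomials: finitely supported coefficient functions int \<Rightarrow> R;
  the sum  \<Sum> r_i X^i  is represented by  i \<mapsto> r_i.\<close>
definition laurent_carrier :: "(int \<Rightarrow> 'a::zero) set" where
  "laurent_carrier = {f. finite {i. f i \<noteq> 0}}"

text \<open>Biadditive extension of (r X^m)(s X^n) = (r sigma^m(s)) X^(m+n):
  coefficient of X^k in f g is  \<Sum>_{m+n=k} f_m sigma^m(g_n).\<close>
definition laurent_mult :: "('a::ab_group_add \<Rightarrow> 'a \<Rightarrow> 'a) \<Rightarrow> ('a \<Rightarrow> 'a)
    \<Rightarrow> (int \<Rightarrow> 'a) \<Rightarrow> (int \<Rightarrow> 'a) \<Rightarrow> (int \<Rightarrow> 'a)" where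
  "laurent_mult mul \<sigma> f g = (\<lambda>k. \<Sum>m\<in>{m. f m \<noteq> 0}. mul (f m) (spow \<sigma> m (g (k - m))))"

end

theory Submission
  imports Defs
begin

definition Lc :: "(int \<Rightarrow> 'a::zero) set \<Rightarrow> nat \<Rightarrow> 'a set" where
  "Lc I n = {f 0 | f. f \<in> I \<and> (\<forall>i. f i \<noteq> 0 \<longrightarrow> 0 \<le> i \<and> i \<le> int n)}"

definition mnm :: "'a::zero \<Rightarrow> int \<Rightarrow> int \<Rightarrow> 'a" where
  "mnm c k = (\<lambda>i. if i = k then c else 0)"

lemma Lc_mono_n: "n \<le> m \<Longrightarrow> Lc I n \<subseteq> Lc I m"
  unfolding Lc_def by force

lemma Lc_mono_I: "I \<subseteq> J \<Longrightarrow> Lc I n \<subseteq> Lc J n"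
  unfolding Lc_def by force

lemma Lc_mono2: "n \<le> m \<Longrightarrow> I \<subseteq> J \<Longrightarrow> Lc I n \<subseteq> Lc J m"
  using Lc_mono_n Lc_mono_I by blast

lemma acc_abstract:
  fixes I :: "nat \<Rightarrow> (int \<Rightarrow> 'a::zero) set"
  assumes Rn: "\<forall>C. (\<forall>n. P (C n)) \<and> (\<forall>n. C n \<subseteq> C (Suc n)) \<longrightarrow> (\<exists>N. \<forall>n\<ge>N. C n = C N)"
    and PL: "\<And>K n. Q K \<Longrightarrow> P (Lc K n)"
    and QI: "\<And>m. Q (I m)"
    and ch: "\<And>m. I m \<subseteq> I (Suc m)"
    and refl: "\<And>K K'. Q K \<Longrightarrow> Q K' \<Longrightarrow> K \<subseteq> K' \<Longrightarrow> (\<forall>n. Lc K n = Lc K' n) \<Longrightarrow> K = K'"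
  shows "\<exists>N. \<forall>n\<ge>N. I n = I N"
proof -
  have Imono: "\<And>a b. a \<le> b \<Longrightarrow> I a \<subseteq> I b"
    using ch by (simp add: lift_Suc_mono_le)
  define D where "D m = Lc (I m) m" for m
  have "\<exists>N. \<forall>n\<ge>N. D n = D N"
    using Rn[rule_format, of D] PL QI Imono unfolding D_def
    by (meson Lc_mono2 le_SucI order_refl)
  then obtain N0 where N0: "\<And>n. n \<ge> N0 \<Longrightarrow> D n = D N0" by blast
  have "\<forall>n. \<exists>M. \<forall>m\<ge>M. Lc (I m) n = Lc (I M) n"
  proof
    fix n
    show "\<exists>M. \<forall>m\<ge>M. Lc (I m) n = Lc (I M) n"
      using Rn[rule_format, of "\<lambda>m. Lc (I m) n"] PL QI Imono
      by (meson Lc_mono_I le_SucI order_refl)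
  qed
  then obtain M where M: "\<And>n m. m \<ge> M n \<Longrightarrow> Lc (I m) n = Lc (I (M n)) n" by metis
  define N where "N = max N0 (Max (M ` {..N0}))"
  have NM: "n \<le> N0 \<Longrightarrow> M n \<le> N" for n
    unfolding N_def by (meson Max_ge atMost_iff finite_atMost finite_imageI image_eqI max.coboundedI2)
  have "I m = I N" if "m \<ge> N" for m
  proof -
    have "Lc (I N) n = Lc (I m) n" for n
    proof (cases "n \<le> N0")
      case True
      then show ?thesis using M[of n m] M[of n N] NM[OF True] that by simp
    next
      case False
      have a: "Lc (I N) n \<subseteq> Lc (I m) n" using Imono[OF that] Lc_mono_I by blast
      have "Lc (I m) n \<subseteq> D (max n m)" unfolding D_def
        using Imono[of m "max n m"] by (intro Lc_mono2) auto
      also have "\<dots> = D N0" using False by (intro N0) simp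
      also have "\<dots> \<subseteq> Lc (I N) n" unfolding D_def
        using False by (intro Lc_mono2 Imono) (auto simp: N_def)
      finally show ?thesis using a by blast
    qed
    then show ?thesis using refl[OF QI QI Imono[OF that]] by simp
  qed
  then show ?thesis by blast
qed

lemma reflect_abstract:
  fixes sh :: "int \<Rightarrow> (int \<Rightarrow> 'a::ab_group_add) \<Rightarrow> (int \<Rightarrow> 'a)"
  assumes QI: "Q I" and QJ: "Q J" and IJ: "I \<subseteq> J" and L: "\<forall>n. Lc I n = Lc J n"
    and Qadd: "\<And>K. Q K \<Longrightarrow> 0 \<in> K \<and> (\<forall>x\<in>K. \<forall>y\<in>K. x + y \<in> K \<and> - x \<in> K) \<and> K \<subseteq> laurent_carrier"
    and Qsh: "\<And>K k g. Q K \<Longrightarrow> g \<in> K \<Longrightarrow> sh k g \<in> K"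
    and shinv: "\<And>k g. sh (-k) (sh k g) = g"
    and shz: "\<And>k g j. (sh k g j = 0) = (g (j - k) = 0)"
  shows "I = J"
proof -
  have claim: "\<forall>g\<in>J. (\<forall>i. g i \<noteq> 0 \<longrightarrow> 0 \<le> i \<and> i \<le> int n) \<longrightarrow> g \<in> I" for n
  proof (induction n)
    case 0
    show ?case
    proof (intro ballI impI)
      fix g assume gJ: "g \<in> J" and sg: "\<forall>i. g i \<noteq> 0 \<longrightarrow> 0 \<le> i \<and> i \<le> int 0"
      have "g 0 \<in> Lc J 0" unfolding Lc_def using gJ sg by blast
      then have "g 0 \<in> Lc I 0" using L by simp
      then obtain f where fI: "f \<in> I" and sf: "\<forall>i. f i \<noteq> 0 \<longrightarrow> 0 \<le> i \<and> i \<le> int 0"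
        and f0: "f 0 = g 0" unfolding Lc_def by auto
      have "g = f"
      proof
        fix i show "g i = f i" using sf[rule_format, of i] sg[rule_format, of i] f0 by (cases "i = 0"; cases "f i = 0"; cases "g i = 0") auto
      qed
      then show "g \<in> I" using fI by simp
    qed
  next
    case (Suc n)
    show ?case
    proof (intro ballI impI)
      fix g assume gJ: "g \<in> J" and sg: "\<forall>i. g i \<noteq> 0 \<longrightarrow> 0 \<le> i \<and> i \<le> int (Suc n)"
      have "g 0 \<in> Lc J (Suc n)" unfolding Lc_def using gJ sg by blast
      then have "g 0 \<in> Lc I (Suc n)" using L by simp
      then obtain f where fI: "f \<in> I" and sf: "\<forall>i. f i \<noteq> 0 \<longrightarrow> 0 \<le> i \<and> i \<le> int (Suc n)"
        and f0: "f 0 = g 0" unfolding Lc_def by auto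
      define h where "h = g + - f"
      have fJ: "f \<in> J" using fI IJ by blast
      have hJ: "h \<in> J" unfolding h_def using Qadd[OF QJ] gJ fJ by blast
      have sh_: "h i \<noteq> 0 \<Longrightarrow> 1 \<le> i \<and> i \<le> int (Suc n)" for i
      proof -
        assume hi: "h i \<noteq> 0"
        then have "i \<noteq> 0" using f0 unfolding h_def by auto
        moreover have "g i \<noteq> 0 \<or> f i \<noteq> 0" using hi unfolding h_def by auto
        ultimately show ?thesis using sf[rule_format, of i] sg[rule_format, of i] by auto
      qed
      define h' where "h' = sh (-1) h"
      have h'J: "h' \<in> J" unfolding h'_def using Qsh[OF QJ hJ] .
      have "\<forall>i. h' i \<noteq> 0 \<longrightarrow> 0 \<le> i \<and> i \<le> int n"
      proof (intro allI impI)
        fix i assume "h' i \<noteq> 0"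
        then have "h (i + 1) \<noteq> 0" unfolding h'_def using shz[of "-1" h i] by simp
        then show "0 \<le> i \<and> i \<le> int n" using sh_[of "i+1"] by simp
      qed
      then have "h' \<in> I" using Suc.IH h'J by blast
      then have "sh 1 h' \<in> I" using Qsh[OF QI] by blast
      moreover have "sh 1 h' = h" unfolding h'_def using shinv[of "-1" h] by simp
      ultimately have "h \<in> I" by simp
      then have "h + f \<in> I" using Qadd[OF QI] fI by blast
      moreover have "h + f = g" unfolding h_def by simp
      ultimately show "g \<in> I" by simp
    qed
  qed
  have "J \<subseteq> I"
  proof
    fix g assume gJ: "g \<in> J"
    show "g \<in> I"
    proof (cases "g = 0")
      case True then show ?thesis using Qadd[OF QI] by simp
    next
      case False
      define A where "A = {i. g i \<noteq> 0}"
      have finA: "finite A" using gJ Qadd[OF QJ] unfolding A_def laurent_carrier_def by blast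
      have neA: "A \<noteq> {}" using False unfolding A_def by auto
      define a where "a = Min A"
      define b where "b = Max A"
      define g' where "g' = sh (-a) g"
      have g'J: "g' \<in> J" unfolding g'_def using Qsh[OF QJ gJ] .
      have "\<forall>i. g' i \<noteq> 0 \<longrightarrow> 0 \<le> i \<and> i \<le> int (nat (b - a))"
      proof (intro allI impI)
        fix i assume "g' i \<noteq> 0"
        then have "i + a \<in> A" unfolding g'_def A_def using shz[of "-a" g i] by simp
        then have "a \<le> i + a" "i + a \<le> b" unfolding a_def b_def using finA Min_le Max_ge by blast+
        then show "0 \<le> i \<and> i \<le> int (nat (b - a))" by simp
      qed
      then have "g' \<in> I" using claim g'J by blast
      then have "sh a g' \<in> I" using Qsh[OF QI] by blast
      moreover have "sh a g' = g" unfolding g'_def using shinv[of "-a" g] by simp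
      ultimately show ?thesis by simp
    qed
  qed
  then show ?thesis using IJ by blast
qed


lemma ring_facts:
  assumes "nonassoc_ring UNIV mul one"
  shows "mul 0 x = 0" "mul x 0 = 0" "mul one x = x" "mul x one = x"
proof -
  have d1: "mul (0 + 0) x = mul 0 x + mul 0 x" and d2: "mul x (0 + 0) = mul x 0 + mul x 0"
    using assms unfolding nonassoc_ring_def by blast+
  show "mul 0 x = 0" using d1 by simp
  show "mul x 0 = 0" using d2 by simp
  show "mul one x = x" "mul x one = x" using assms unfolding nonassoc_ring_def by blast+
qed

lemma funpow_fix: "f c = c \<Longrightarrow> (f ^^ n) c = c"
  by (induction n) auto

lemma funpow_inv1:
  fixes f g :: "'a \<Rightarrow> 'a"
  assumes "\<And>y. g (f y) = y"
  shows "(g ^^ n) ((f ^^ n) x) = x"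
proof (induction n)
  case 0 show ?case by simp
next
  case (Suc n)
  have "(g ^^ Suc n) y = (g ^^ n) (g y)" for y by (simp add: funpow_Suc_right del: funpow.simps)
  then show ?case using Suc assms by simp
qed

context
  fixes \<sigma> :: "'a::ab_group_add \<Rightarrow> 'a" and one :: 'a
  assumes bij: "bij \<sigma>" and add: "\<forall>x y. \<sigma> (x + y) = \<sigma> x + \<sigma> y" and one: "\<sigma> one = one"
begin

lemma sig0: "\<sigma> 0 = 0"
proof -
  have "\<sigma> (0 + 0) = \<sigma> 0 + \<sigma> 0" using add by blast
  then show ?thesis by simp
qed

lemma inv_fix: "\<sigma> c = c \<Longrightarrow> inv \<sigma> c = c"
  using bij by (metis bij_is_inj inv_f_f)

lemma spow_fix: "\<sigma> c = c \<Longrightarrow> spow \<sigma> k c = c"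
  unfolding spow_def using funpow_fix[of \<sigma> c] funpow_fix[of "inv \<sigma>" c] inv_fix by auto

lemma spow_zero: "spow \<sigma> k 0 = 0"
  using spow_fix[OF sig0] .

lemma spow_one: "spow \<sigma> k one = one"
  using spow_fix[OF one] .

lemma spow_inv: "spow \<sigma> (-k) (spow \<sigma> k x) = x"
proof -
  have a: "inv \<sigma> (\<sigma> y) = y" for y using bij by (simp add: bij_is_inj)
  have b: "\<sigma> (inv \<sigma> y) = y" for y using bij by (simp add: bij_is_surj surj_f_inv_f)
  consider "k = 0" | "k > 0" | "k < 0" by linarith
  then show ?thesis
  proof cases
    case 1 then show ?thesis by (simp add: spow_def)
  next
    case 2 then show ?thesis unfolding spow_def using funpow_inv1[of "inv \<sigma>" \<sigma>, OF a] by simp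
  next
    case 3 then show ?thesis unfolding spow_def using funpow_inv1[of \<sigma> "inv \<sigma>", OF b] by simp
  qed
qed

lemma spow_eq0: "(spow \<sigma> k x = 0) = (x = 0)"
  by (metis spow_inv spow_zero)

end

lemma spow0: "spow \<sigma> 0 x = x"
  by (simp add: spow_def)

lemma mnm_carrier: "mnm c k \<in> laurent_carrier"
proof -
  have "{i. mnm c k i \<noteq> 0} \<subseteq> {k}" unfolding mnm_def by auto
  then show ?thesis unfolding laurent_carrier_def using finite_subset by auto
qed

lemma lm_left:
  assumes m0: "\<And>y. mul 0 y = 0"
  shows "laurent_mult mul \<sigma> (mnm c k) g = (\<lambda>j. mul c (spow \<sigma> k (g (j - k))))"
proof
  fix j
  show "laurent_mult mul \<sigma> (mnm c k) g j = mul c (spow \<sigma> k (g (j - k)))"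
  proof (cases "c = 0")
    case True
    then have "{m. mnm c k m \<noteq> 0} = {}" unfolding mnm_def by auto
    then show ?thesis using True m0 unfolding laurent_mult_def by simp
  next
    case False
    then have "{m. mnm c k m \<noteq> 0} = {k}" unfolding mnm_def by auto
    then show ?thesis unfolding laurent_mult_def by (simp add: mnm_def)
  qed
qed

lemma lm_right:
  assumes m0: "\<And>y. mul 0 y = 0" and m0': "\<And>y. mul y 0 = 0"
    and sp0: "\<And>m. spow \<sigma> m 0 = 0"
    and g: "g \<in> laurent_carrier"
  shows "laurent_mult mul \<sigma> g (mnm c k) = (\<lambda>j. mul (g (j - k)) (spow \<sigma> (j - k) c))"
proof
  fix j
  define A where "A = {m. g m \<noteq> 0}"
  have finA: "finite A" using g unfolding laurent_carrier_def A_def by simp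
  have "laurent_mult mul \<sigma> g (mnm c k) j = (\<Sum>m\<in>A. mul (g m) (spow \<sigma> m (mnm c k (j - m))))"
    unfolding laurent_mult_def A_def by simp
  also have "\<dots> = (\<Sum>m\<in>A. if m = j - k then mul (g m) (spow \<sigma> m c) else 0)"
    by (rule sum.cong) (auto simp: mnm_def sp0 m0')
  also have "\<dots> = (if j - k \<in> A then mul (g (j - k)) (spow \<sigma> (j - k) c) else 0)"
    using finA by (simp add: sum.delta)
  also have "\<dots> = mul (g (j - k)) (spow \<sigma> (j - k) c)"
    unfolding A_def using m0 by auto
  finally show "laurent_mult mul \<sigma> g (mnm c k) j = mul (g (j - k)) (spow \<sigma> (j - k) c)" .
qed

theorem theorem6:
  fixes mul :: "'a::ab_group_add \<Rightarrow> 'a \<Rightarrow> 'a" and one :: 'a and \<sigma> :: "'a \<Rightarrow> 'a"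
  assumes R: "nonassoc_ring UNIV mul one"
    and bij: "bij \<sigma>"
    and add: "\<forall>x y. \<sigma> (x + y) = \<sigma> x + \<sigma> y"
    and one: "\<sigma> one = one"
  shows "(left_noetherian UNIV mul \<longrightarrow> left_noetherian laurent_carrier (laurent_mult mul \<sigma>))
       \<and> (right_noetherian UNIV mul \<longrightarrow> right_noetherian laurent_carrier (laurent_mult mul \<sigma>))"
proof (intro conjI impI)
  note rf = ring_facts[OF R]
  note sz = spow_zero[OF bij add one] and so = spow_one[OF bij add one]
    and si = spow_inv[OF bij add one] and se = spow_eq0[OF bij add one]
  have addc: "f + g \<in> laurent_carrier" "- f \<in> laurent_carrier"
    if "f \<in> laurent_carrier" "g \<in> laurent_carrier" for f g :: "int \<Rightarrow> 'a"
  proof -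
    have "{i. (f + g) i \<noteq> 0} \<subseteq> {i. f i \<noteq> 0} \<union> {i. g i \<noteq> 0}" by auto
    then show "f + g \<in> laurent_carrier" using that unfolding laurent_carrier_def
      using finite_subset by auto
    show "- f \<in> laurent_carrier" using that unfolding laurent_carrier_def by simp
  qed
  show "left_noetherian laurent_carrier (laurent_mult mul \<sigma>)" if LN: "left_noetherian UNIV mul"
    unfolding left_noetherian_def
  proof (intro allI impI)
    fix I :: "nat \<Rightarrow> (int \<Rightarrow> 'a) set"
    assume ch: "(\<forall>n. left_ideal laurent_carrier (laurent_mult mul \<sigma>) (I n)) \<and> (\<forall>n. I n \<subseteq> I (Suc n))"
    let ?Q = "left_ideal laurent_carrier (laurent_mult mul \<sigma>)"
    define sh where "sh k g = (\<lambda>j. spow \<sigma> k (g (j - k)))" for k and g :: "int \<Rightarrow> 'a"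
    have Qadd: "0 \<in> K \<and> (\<forall>x\<in>K. \<forall>y\<in>K. x + y \<in> K \<and> - x \<in> K) \<and> K \<subseteq> laurent_carrier"
      if "?Q K" for K using that unfolding left_ideal_def additive_subgroup_def by blast
    have Qmul: "laurent_mult mul \<sigma> (mnm c k) g \<in> K" if "?Q K" "g \<in> K" for K c k g
      using that mnm_carrier unfolding left_ideal_def by blast
    have Qsh: "sh k g \<in> K" if "?Q K" "g \<in> K" for K k g
      using Qmul[OF that, of one k] unfolding lm_left[of mul, OF rf(1)] sh_def rf(3) .
    have PL: "left_ideal UNIV mul (Lc K n)" if "?Q K" for K n
    proof -
      have "0 \<in> Lc K n" unfolding Lc_def using Qadd[OF that] by (intro CollectI exI[of _ 0]) auto
      moreover have "x + y \<in> Lc K n \<and> - x \<in> Lc K n" if xin: "x \<in> Lc K n" and yin: "y \<in> Lc K n" for x y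
      proof -
        obtain f where f: "f \<in> K" "\<forall>i. f i \<noteq> 0 \<longrightarrow> 0 \<le> i \<and> i \<le> int n" "x = f 0"
          using xin unfolding Lc_def by blast
        obtain g where g: "g \<in> K" "\<forall>i. g i \<noteq> 0 \<longrightarrow> 0 \<le> i \<and> i \<le> int n" "y = g 0"
          using yin unfolding Lc_def by blast
        have "f + g \<in> K" "- f \<in> K" using Qadd[OF \<open>?Q K\<close>] f g by blast+
        moreover have "\<forall>i. (f + g) i \<noteq> 0 \<longrightarrow> 0 \<le> i \<and> i \<le> int n"
        proof (intro allI impI)
          fix i assume "(f + g) i \<noteq> 0"
          then have "f i \<noteq> 0 \<or> g i \<noteq> 0" by auto
          then show "0 \<le> i \<and> i \<le> int n" using f(2) g(2) by blast
        qed
        moreover have "\<forall>i. (- f) i \<noteq> 0 \<longrightarrow> 0 \<le> i \<and> i \<le> int n" using f by simp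
        moreover have "x + y = (f + g) 0" "- x = (- f) 0" using f g by simp_all
        ultimately show ?thesis unfolding Lc_def by blast
      qed
      moreover have "mul r x \<in> Lc K n" if xin: "x \<in> Lc K n" for r x
      proof -
        obtain f where f: "f \<in> K" "\<forall>i. f i \<noteq> 0 \<longrightarrow> 0 \<le> i \<and> i \<le> int n" "x = f 0"
          using xin unfolding Lc_def by blast
        have e: "laurent_mult mul \<sigma> (mnm r 0) f = (\<lambda>j. mul r (f j))"
          unfolding lm_left[of mul, OF rf(1)] by (simp add: spow0)
        have "(\<lambda>j. mul r (f j)) \<in> K" using Qmul[OF \<open>?Q K\<close> f(1), of r 0] e by simp
        moreover have "\<forall>i. mul r (f i) \<noteq> 0 \<longrightarrow> 0 \<le> i \<and> i \<le> int n"
        proof (intro allI impI)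
          fix i assume "mul r (f i) \<noteq> 0"
          then have "f i \<noteq> 0" using rf(2) by auto
          then show "0 \<le> i \<and> i \<le> int n" using f(2) by blast
        qed
        moreover have "mul r x = (\<lambda>j. mul r (f j)) 0" using f by simp
        ultimately show ?thesis unfolding Lc_def by - (rule CollectI, rule exI[of _ "\<lambda>j. mul r (f j)"], simp)
      qed
      ultimately show ?thesis unfolding left_ideal_def additive_subgroup_def by blast
    qed
    show "\<exists>N. \<forall>n\<ge>N. I n = I N"
    proof (rule acc_abstract[where P = "left_ideal UNIV mul" and Q = ?Q])
      show "\<forall>C. (\<forall>n. left_ideal UNIV mul (C n)) \<and> (\<forall>n. C n \<subseteq> C (Suc n)) \<longrightarrow> (\<exists>N. \<forall>n\<ge>N. C n = C N)"
        using LN unfolding left_noetherian_def .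
      show "\<And>K n. ?Q K \<Longrightarrow> left_ideal UNIV mul (Lc K n)" using PL .
      show "\<And>m. ?Q (I m)" "\<And>m. I m \<subseteq> I (Suc m)" using ch by blast+
      show "K = K'" if "?Q K" "?Q K'" "K \<subseteq> K'" "\<forall>n. Lc K n = Lc K' n" for K K'
      proof (rule reflect_abstract[where Q = ?Q and sh = sh, OF that])
        show "\<And>K. ?Q K \<Longrightarrow> 0 \<in> K \<and> (\<forall>x\<in>K. \<forall>y\<in>K. x + y \<in> K \<and> - x \<in> K) \<and> K \<subseteq> laurent_carrier"
          using Qadd .
        show "\<And>K k g. ?Q K \<Longrightarrow> g \<in> K \<Longrightarrow> sh k g \<in> K" using Qsh .
        show "\<And>k g. sh (- k) (sh k g) = g" unfolding sh_def by (simp add: si)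
        show "\<And>k g j. (sh k g j = 0) = (g (j - k) = 0)" unfolding sh_def by (simp add: se)
      qed
    qed
  qed
  show "right_noetherian laurent_carrier (laurent_mult mul \<sigma>)" if RN: "right_noetherian UNIV mul"
    unfolding right_noetherian_def
  proof (intro allI impI)
    fix I :: "nat \<Rightarrow> (int \<Rightarrow> 'a) set"
    assume ch: "(\<forall>n. right_ideal laurent_carrier (laurent_mult mul \<sigma>) (I n)) \<and> (\<forall>n. I n \<subseteq> I (Suc n))"
    let ?Q = "right_ideal laurent_carrier (laurent_mult mul \<sigma>)"
    define sh where "sh k g = (\<lambda>j. g (j - k))" for k and g :: "int \<Rightarrow> 'a"
    have Qadd: "0 \<in> K \<and> (\<forall>x\<in>K. \<forall>y\<in>K. x + y \<in> K \<and> - x \<in> K) \<and> K \<subseteq> laurent_carrier"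
      if "?Q K" for K using that unfolding right_ideal_def additive_subgroup_def by blast
    have Qmul: "laurent_mult mul \<sigma> g (mnm c k) \<in> K" if "?Q K" "g \<in> K" for K c k g
      using that mnm_carrier unfolding right_ideal_def by blast
    have lmr: "laurent_mult mul \<sigma> g (mnm c k) = (\<lambda>j. mul (g (j - k)) (spow \<sigma> (j - k) c))"
      if "?Q K" "g \<in> K" for K c k g
      using lm_right[of mul, OF rf(1) rf(2) sz] Qadd[OF that(1)] that(2) by blast
    have Qsh: "sh k g \<in> K" if "?Q K" "g \<in> K" for K k g
      using Qmul[OF that, of one k] unfolding lmr[OF that] sh_def so rf(4) .
    have PL: "right_ideal UNIV mul (Lc K n)" if "?Q K" for K n
    proof -
      have "0 \<in> Lc K n" unfolding Lc_def using Qadd[OF that] by (intro CollectI exI[of _ 0]) auto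
      moreover have "x + y \<in> Lc K n \<and> - x \<in> Lc K n" if xin: "x \<in> Lc K n" and yin: "y \<in> Lc K n" for x y
      proof -
        obtain f where f: "f \<in> K" "\<forall>i. f i \<noteq> 0 \<longrightarrow> 0 \<le> i \<and> i \<le> int n" "x = f 0"
          using xin unfolding Lc_def by blast
        obtain g where g: "g \<in> K" "\<forall>i. g i \<noteq> 0 \<longrightarrow> 0 \<le> i \<and> i \<le> int n" "y = g 0"
          using yin unfolding Lc_def by blast
        have "f + g \<in> K" "- f \<in> K" using Qadd[OF \<open>?Q K\<close>] f g by blast+
        moreover have "\<forall>i. (f + g) i \<noteq> 0 \<longrightarrow> 0 \<le> i \<and> i \<le> int n"
        proof (intro allI impI)
          fix i assume "(f + g) i \<noteq> 0"
          then have "f i \<noteq> 0 \<or> g i \<noteq> 0" by auto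
          then show "0 \<le> i \<and> i \<le> int n" using f(2) g(2) by blast
        qed
        moreover have "\<forall>i. (- f) i \<noteq> 0 \<longrightarrow> 0 \<le> i \<and> i \<le> int n" using f by simp
        moreover have "x + y = (f + g) 0" "- x = (- f) 0" using f g by simp_all
        ultimately show ?thesis unfolding Lc_def by blast
      qed
      moreover have "mul x r \<in> Lc K n" if xin: "x \<in> Lc K n" for r x
      proof -
        obtain f where f: "f \<in> K" "\<forall>i. f i \<noteq> 0 \<longrightarrow> 0 \<le> i \<and> i \<le> int n" "x = f 0"
          using xin unfolding Lc_def by blast
        have e: "laurent_mult mul \<sigma> f (mnm r 0) = (\<lambda>j. mul (f j) (spow \<sigma> j r))"
          unfolding lmr[OF \<open>?Q K\<close> f(1)] by simp
        have "(\<lambda>j. mul (f j) (spow \<sigma> j r)) \<in> K" using Qmul[OF \<open>?Q K\<close> f(1), of r 0] e by simp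
        moreover have "\<forall>i. mul (f i) (spow \<sigma> i r) \<noteq> 0 \<longrightarrow> 0 \<le> i \<and> i \<le> int n"
        proof (intro allI impI)
          fix i assume "mul (f i) (spow \<sigma> i r) \<noteq> 0"
          then have "f i \<noteq> 0" using rf(1) by auto
          then show "0 \<le> i \<and> i \<le> int n" using f(2) by blast
        qed
        moreover have "mul x r = (\<lambda>j. mul (f j) (spow \<sigma> j r)) 0" using f by (simp add: spow0)
        ultimately show ?thesis unfolding Lc_def by - (rule CollectI, rule exI[of _ "\<lambda>j. mul (f j) (spow \<sigma> j r)"], simp)
      qed
      ultimately show ?thesis unfolding right_ideal_def additive_subgroup_def by blast
    qed
    show "\<exists>N. \<forall>n\<ge>N. I n = I N"
    proof (rule acc_abstract[where P = "right_ideal UNIV mul" and Q = ?Q])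
      show "\<forall>C. (\<forall>n. right_ideal UNIV mul (C n)) \<and> (\<forall>n. C n \<subseteq> C (Suc n)) \<longrightarrow> (\<exists>N. \<forall>n\<ge>N. C n = C N)"
        using RN unfolding right_noetherian_def .
      show "\<And>K n. ?Q K \<Longrightarrow> right_ideal UNIV mul (Lc K n)" using PL .
      show "\<And>m. ?Q (I m)" "\<And>m. I m \<subseteq> I (Suc m)" using ch by blast+
      show "K = K'" if "?Q K" "?Q K'" "K \<subseteq> K'" "\<forall>n. Lc K n = Lc K' n" for K K'
      proof (rule reflect_abstract[where Q = ?Q and sh = sh, OF that])
        show "\<And>K. ?Q K \<Longrightarrow> 0 \<in> K \<and> (\<forall>x\<in>K. \<forall>y\<in>K. x + y \<in> K \<and> - x \<in> K) \<and> K \<subseteq> laurent_carrier"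
          using Qadd .
        show "\<And>K k g. ?Q K \<Longrightarrow> g \<in> K \<Longrightarrow> sh k g \<in> K" using Qsh .
        show "\<And>k g. sh (- k) (sh k g) = g" unfolding sh_def by simp
        show "\<And>k g j. (sh k g j = 0) = (g (j - k) = 0)" unfolding sh_def by simp
      qed
    qed
  qed
qed

end
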